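(* Let $\mathcal H$ be a complex Hilbert space and $T\in\mathcal B(\mathcal H)$ a non-invertible operator with $\|Tx\|\ge\|x\|$ for all $x$ and $\sigma_{ap}(T)\subseteq\partial\mathbb D$. Let $T'=T(T^*T)^{-1}$. Then (i) $\sigma(T)=\overline{\mathbb D}=\sigma(T')$, and (ii) $\sigma_{ap}(T)=\partial\mathbb D=\sigma_{ap}(T')$.
   Context: $\sigma_{ap}$ is the approximate point spectrum (set of $\lambda$ with $A-\lambda I$ not bounded below); $\mathbb D$ is the open unit disc. $T^*T\ge I$ is invertible so $T'$ is defined. *)

theory Defs
  imports "HOL-Analysis.Analysis"
begin

text \<open>Complex Hilbert spaces: a complete real normed vector space with a complex
scalar multiplication (extending the real one) and a complex inner product
(conjugate-linear in the first, linear in the second argument) inducing the norm.\<close>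

class chilbert = complete_space + real_normed_vector +
  fixes cscale :: "complex \<Rightarrow> 'a \<Rightarrow> 'a"
    and cinner :: "'a \<Rightarrow> 'a \<Rightarrow> complex"
  assumes cscale_of_real: "cscale (complex_of_real r) x = r *\<^sub>R x"
    and cscale_add_right: "cscale a (x + y) = cscale a x + cscale a y"
    and cscale_add_left: "cscale (a + b) x = cscale a x + cscale b x"
    and cscale_cscale: "cscale a (cscale b x) = cscale (a * b) x"
    and cscale_one: "cscale 1 x = x"
    and cinner_cnj: "cinner x y = cnj (cinner y x)"
    and cinner_add_right: "cinner x (y + z) = cinner x y + cinner x z"
    and cinner_cscale_right: "cinner x (cscale a y) = a * cinner x y"
    and cinner_self_norm: "cinner x x = complex_of_real ((norm x)\<^sup>2)"

definition bounded_clinear :: "('a::chilbert \<Rightarrow> 'a) \<Rightarrow> bool" where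
  "bounded_clinear T \<longleftrightarrow>
     (\<forall>x y. T (x + y) = T x + T y) \<and> (\<forall>a x. T (cscale a x) = cscale a (T x)) \<and>
     (\<exists>K. \<forall>x. norm (T x) \<le> K * norm x)"

definition op_invertible :: "('a::chilbert \<Rightarrow> 'a) \<Rightarrow> bool" where
  "op_invertible T \<longleftrightarrow> (\<exists>S. bounded_clinear S \<and> S \<circ> T = id \<and> T \<circ> S = id)"

definition op_inverse :: "('a::chilbert \<Rightarrow> 'a) \<Rightarrow> ('a \<Rightarrow> 'a)" where
  "op_inverse T = (THE S. bounded_clinear S \<and> S \<circ> T = id \<and> T \<circ> S = id)"

definition adjoint :: "('a::chilbert \<Rightarrow> 'a) \<Rightarrow> ('a \<Rightarrow> 'a)" where
  "adjoint T = (THE S. \<forall>x y. cinner (T x) y = cinner x (S y))"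

definition spectrum :: "('a::chilbert \<Rightarrow> 'a) \<Rightarrow> complex set" where
  "spectrum T = {l. \<not> op_invertible (\<lambda>x. T x - cscale l x)}"

definition ap_spectrum :: "('a::chilbert \<Rightarrow> 'a) \<Rightarrow> complex set" where
  "ap_spectrum T = {l. \<not> (\<exists>c>0. \<forall>x. c * norm x \<le> norm (T x - cscale l x))}"

end

theory Submission
  imports Defs
begin


lemma cscale_zero_left [simp]: "cscale 0 (x::'a::chilbert) = 0"
  using cscale_of_real[of 0 x] by simp

lemma cscale_zero_right [simp]: "cscale a (0::'a::chilbert) = 0"
  using cscale_add_right[of a "0::'a" 0] by simp

lemma cscale_minus_right: "cscale a (- x) = - cscale a (x::'a::chilbert)"
  using cscale_add_right[of a x "-x"] by (simp add: minus_unique)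

lemma cscale_diff_right: "cscale a (x - y) = cscale a x - cscale a (y::'a::chilbert)"
  using cscale_add_right[of a x "-y"] by (simp add: cscale_minus_right)

lemma cscale_minus_left: "cscale (- a) x = - cscale a (x::'a::chilbert)"
  using cscale_add_left[of a "-a" x] by (simp add: minus_unique)

lemma cscale_diff_left: "cscale (a - b) x = cscale a x - cscale b (x::'a::chilbert)"
  using cscale_add_left[of a "-b" x] by (simp add: cscale_minus_left)

lemma cinner_add_left: "cinner (x + y) z = cinner x z + cinner y (z::'a::chilbert)"
  by (metis cinner_cnj cinner_add_right complex_cnj_add)

lemma cinner_cscale_left: "cinner (cscale a x) y = cnj a * cinner x (y::'a::chilbert)"
  by (metis cinner_cnj cinner_cscale_right complex_cnj_mult complex_cnj_cnj)

lemma cinner_zero_right [simp]: "cinner x (0::'a::chilbert) = 0"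
  using cinner_add_right[of x "0::'a" 0] by simp

lemma cinner_zero_left [simp]: "cinner (0::'a::chilbert) x = 0"
  using cinner_add_left[of "0::'a" 0 x] by simp

lemma cinner_minus_right: "cinner x (- y) = - cinner x (y::'a::chilbert)"
  using cinner_add_right[of x y "-y"] by (simp add: minus_unique)

lemma cinner_diff_right: "cinner x (y - z) = cinner x y - cinner x (z::'a::chilbert)"
  using cinner_add_right[of x y "-z"] by (simp add: cinner_minus_right)

lemma cinner_minus_left: "cinner (- x) y = - cinner x (y::'a::chilbert)"
  using cinner_add_left[of x "-x" y] by (simp add: minus_unique)

lemma cinner_diff_left: "cinner (x - y) z = cinner x z - cinner y (z::'a::chilbert)"
  using cinner_add_left[of x "-y" z] by (simp add: cinner_minus_left)

lemma norm_cscale: "norm (cscale a x) = cmod a * norm (x::'a::chilbert)"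
proof -
  have "complex_of_real ((norm (cscale a x))\<^sup>2) = cnj a * a * complex_of_real ((norm x)\<^sup>2)"
    unfolding cinner_self_norm[symmetric] by (simp add: cinner_cscale_left cinner_cscale_right)
  also have "cnj a * a = complex_of_real ((cmod a)\<^sup>2)"
    by (simp add: complex_norm_square mult.commute del: of_real_power)
  finally have "(norm (cscale a x))\<^sup>2 = ((cmod a) * norm x)\<^sup>2"
    by (metis of_real_eq_iff of_real_mult power_mult_distrib)
  then show ?thesis by (simp add: power2_eq_iff_nonneg)
qed

lemma cinner_self_real: "cinner x (x::'a::chilbert) = complex_of_real ((norm x)\<^sup>2)"
  by (rule cinner_self_norm)

lemma cauchy_schwarz: "cmod (cinner x y) \<le> norm x * norm (y::'a::chilbert)"
proof (cases "y = 0")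
  case True then show ?thesis by simp
next
  case False
  define t where "t = cinner y x / complex_of_real ((norm y)\<^sup>2)"
  define z where "z = x - cscale t y"
  have ny: "norm y \<noteq> 0" using False by simp
  have yz: "cinner y z = 0"
    using ny by (simp add: z_def cinner_diff_right cinner_cscale_right t_def cinner_self_norm)
  have "cinner z z = cinner x z"
    by (simp add: z_def cinner_diff_left cinner_cscale_left yz[unfolded z_def])
  also have "\<dots> = cinner x x - t * cnj (cinner y x)"
    by (simp add: z_def cinner_diff_right cinner_cscale_right cinner_cnj[of x y])
  also have "t * cnj (cinner y x) = complex_of_real ((cmod (cinner y x))\<^sup>2 / (norm y)\<^sup>2)"
    by (simp add: t_def complex_norm_square del: of_real_power)
  finally have "complex_of_real ((norm z)\<^sup>2) = complex_of_real ((norm x)\<^sup>2 - (cmod (cinner y x))\<^sup>2 / (norm y)\<^sup>2)"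
    by (simp add: cinner_self_norm)
  then have "(norm z)\<^sup>2 = (norm x)\<^sup>2 - (cmod (cinner y x))\<^sup>2 / (norm y)\<^sup>2"
    using of_real_eq_iff by blast
  then have "(cmod (cinner y x))\<^sup>2 / (norm y)\<^sup>2 \<le> (norm x)\<^sup>2"
    by (metis diff_ge_0_iff_ge zero_le_power2)
  then have "(cmod (cinner y x))\<^sup>2 \<le> (norm x * norm y)\<^sup>2"
    using ny by (simp add: divide_le_eq power_mult_distrib)
  then have "cmod (cinner y x) \<le> norm x * norm y"
    by (simp add: power2_le_iff_abs_le)
  moreover have "cmod (cinner x y) = cmod (cinner y x)"
    by (metis cinner_cnj complex_mod_cnj)
  ultimately show ?thesis by simp
qed


section \<open>Operators\<close>

lemma bcl_add: "bounded_clinear T \<Longrightarrow> T (x + y) = T x + T y"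
  by (simp add: bounded_clinear_def)
lemma bcl_scale: "bounded_clinear T \<Longrightarrow> T (cscale a x) = cscale a (T x)"
  by (simp add: bounded_clinear_def)
lemma bcl_zero: "bounded_clinear T \<Longrightarrow> T 0 = 0"
  using bcl_add[of T 0 0] by simp
lemma bcl_minus: "bounded_clinear T \<Longrightarrow> T (- x) = - T x"
  using bcl_add[of T x "-x"] by (simp add: bcl_zero minus_unique)
lemma bcl_diff: "bounded_clinear T \<Longrightarrow> T (x - y) = T x - T y"
  using bcl_add[of T x "-y"] by (simp add: bcl_minus)
lemma bcl_bound: "bounded_clinear T \<Longrightarrow> \<exists>K>0. \<forall>x. norm (T x) \<le> K * norm x"
proof -
  assume "bounded_clinear T"
  then obtain K where K: "\<forall>x. norm (T x) \<le> K * norm x" by (auto simp: bounded_clinear_def)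
  have "\<forall>x. norm (T x) \<le> (max K 1) * norm x"
    using K by (meson dual_order.trans max.cobounded1 mult_right_mono norm_ge_zero)
  then show ?thesis by (intro exI[of _ "max K 1"]) auto
qed

lemma bcl_intro:
  assumes "\<And>x y. T (x + y) = T x + T y" "\<And>a x. T (cscale a x) = cscale a (T x)"
    "\<And>x. norm (T x) \<le> K * norm x"
  shows "bounded_clinear T"
  using assms unfolding bounded_clinear_def by blast

lemma bcl_sum: "bounded_clinear A \<Longrightarrow> bounded_clinear E \<Longrightarrow> bounded_clinear (\<lambda>x. A x + E x)"
proof -
  assume a: "bounded_clinear A" "bounded_clinear E"
  obtain K1 where K1: "\<forall>x. norm (A x) \<le> K1 * norm x" using bcl_bound[OF a(1)] by auto
  obtain K2 where K2: "\<forall>x. norm (E x) \<le> K2 * norm x" using bcl_bound[OF a(2)] by auto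
  show ?thesis
  proof (rule bcl_intro[where K="K1+K2"])
    show "A (x + y) + E (x + y) = A x + E x + (A y + E y)" for x y
      using a by (simp add: bcl_add)
    show "A (cscale c x) + E (cscale c x) = cscale c (A x + E x)" for c x
      using a by (simp add: bcl_scale cscale_add_right)
    show "norm (A x + E x) \<le> (K1 + K2) * norm x" for x
      using K1 K2 norm_triangle_ineq[of "A x" "E x"] by (smt (verit) distrib_right)
  qed
qed

lemma bcl_comp: "bounded_clinear A \<Longrightarrow> bounded_clinear E \<Longrightarrow> bounded_clinear (A \<circ> E)"
proof -
  assume a: "bounded_clinear A" "bounded_clinear E"
  obtain K1 where K1: "K1 > 0" "\<forall>x. norm (A x) \<le> K1 * norm x" using bcl_bound[OF a(1)] by auto
  obtain K2 where K2: "\<forall>x. norm (E x) \<le> K2 * norm x" using bcl_bound[OF a(2)] by auto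
  show ?thesis
  proof (rule bcl_intro[where K="K1*K2"])
    show "(A \<circ> E) (x + y) = (A \<circ> E) x + (A \<circ> E) y" for x y
      using a by (simp add: bcl_add)
    show "(A \<circ> E) (cscale c x) = cscale c ((A \<circ> E) x)" for c x
      using a by (simp add: bcl_scale)
    show "norm ((A \<circ> E) x) \<le> (K1 * K2) * norm x" for x
      using K1(2)[rule_format, of "E x"] K2[rule_format, of x] K1(1)
      by (smt (verit) mult.assoc mult_left_mono o_apply)
  qed
qed

lemma bcl_shift: "bounded_clinear S \<Longrightarrow> bounded_clinear (\<lambda>x. S x - cscale l x)"
proof -
  assume a: "bounded_clinear S"
  have b: "bounded_clinear (\<lambda>x. cscale (-l) x)"
    by (rule bcl_intro[where K="cmod l"]) (auto simp: cscale_add_right cscale_cscale mult.commute norm_cscale)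
  have "(\<lambda>x. S x - cscale l x) = (\<lambda>x. S x + cscale (-l) x)"
    by (simp add: cscale_minus_left)
  then show ?thesis using bcl_sum[OF a b] by simp
qed

lemma op_inverse_props:
  assumes "op_invertible A"
  shows "bounded_clinear (op_inverse A) \<and> op_inverse A \<circ> A = id \<and> A \<circ> op_inverse A = id"
proof -
  obtain S where S: "bounded_clinear S" "S \<circ> A = id" "A \<circ> S = id"
    using assms unfolding op_invertible_def by blast
  have "op_inverse A = S"
    unfolding op_inverse_def
  proof (rule the_equality)
    show "bounded_clinear S \<and> S \<circ> A = id \<and> A \<circ> S = id" using S by blast
    fix S' assume "bounded_clinear S' \<and> S' \<circ> A = id \<and> A \<circ> S' = id"
    then have "S' \<circ> A = id" by blast
    then show "S' = S" using S(3) by (metis comp_assoc comp_id id_comp)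
  qed
  then show ?thesis using S by simp
qed

lemma op_inverse_apply:
  assumes "op_invertible A"
  shows "op_inverse A (A x) = x" "A (op_inverse A y) = y"
  using op_inverse_props[OF assms] by (metis comp_apply id_apply)+

lemma op_inverse_bound:
  assumes "op_invertible A"
  shows "\<exists>M>0. \<forall>y. norm (op_inverse A y) \<le> M * norm y"
  using op_inverse_props[OF assms] bcl_bound by blast

lemma invertible_below:
  assumes "op_invertible A"
  shows "\<exists>c>0. \<forall>x. c * norm x \<le> norm (A x)"
proof -
  obtain M where M: "M > 0" "\<forall>y. norm (op_inverse A y) \<le> M * norm y"
    using op_inverse_bound[OF assms] by blast
  have "(1/M) * norm x \<le> norm (A x)" for x
    using M(2)[rule_format, of "A x"] M(1) op_inverse_apply(1)[OF assms, of x]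
    by (simp add: divide_le_eq mult.commute)
  then show ?thesis using M(1) by (intro exI[of _ "1/M"]) auto
qed

lemma inj_below:
  assumes "bounded_clinear A" "c > 0" "\<forall>x. c * norm x \<le> norm (A x)" "A x = A y"
  shows "x = y"
proof -
  have "A (x - y) = 0" using assms(1,4) by (simp add: bcl_diff)
  then have "c * norm (x - y) \<le> 0" using assms(3) by (metis norm_zero)
  then show ?thesis using assms(2) by (simp add: mult_le_0_iff)
qed

lemma invertible_from_surj:
  assumes A: "bounded_clinear A" and c: "c > 0" "\<forall>x. c * norm x \<le> norm (A x)"
    and s: "surj A"
  shows "op_invertible A"
proof -
  define S where "S = inv A"
  have AS: "A (S y) = y" for y unfolding S_def using s by (simp add: surj_f_inv_f)
  have SA: "S (A x) = x" for x using inj_below[OF A c] AS by metis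
  have "bounded_clinear S"
  proof (rule bcl_intro[where K="1/c"])
    show "S (x + y) = S x + S y" for x y
      using SA[of "S x + S y"] AS[of x] AS[of y] bcl_add[OF A, of "S x" "S y"] by metis
    show "S (cscale a x) = cscale a (S x)" for a x
      using SA[of "cscale a (S x)"] AS[of x] bcl_scale[OF A, of a "S x"] by metis
    show "norm (S x) \<le> 1 / c * norm x" for x
      using c(2)[rule_format, of "S x"] AS[of x] c(1) by (simp add: field_simps)
  qed
  then show ?thesis unfolding op_invertible_def using AS SA by (intro exI[of _ S]) auto
qed

lemma perturb:
  assumes A: "bounded_clinear A" "op_invertible A"
    and M: "M > 0" "\<forall>y. norm (op_inverse A y) \<le> M * norm y"
    and E: "bounded_clinear E" "\<forall>x. norm (E x) \<le> e * norm x" "e * M < 1" and e0: "e \<ge> 0"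
  shows "op_invertible (\<lambda>x. A x + E x)"
proof -
  define R where "R = op_inverse A"
  have RL: "bounded_clinear R" using op_inverse_props[OF A(2)] R_def by simp
  have ex: "\<exists>x. y = A x + E x" for y
  proof -
      define f where "f = (\<lambda>x. R (y - E x))"
      have "dist (f x) (f x') \<le> (M * e) * dist x x'" for x x'
      proof -
        have "f x - f x' = R (E x' - E x)"
          unfolding f_def using RL E(1) by (simp add: bcl_diff[symmetric] )
        then have "norm (f x - f x') \<le> M * norm (E (x' - x))"
          using M(2) R_def E(1) by (simp add: bcl_diff)
        also have "\<dots> \<le> M * (e * norm (x' - x))"
          using E(2) M(1) by (simp)
        finally show ?thesis by (simp add: dist_norm norm_minus_commute mult.assoc)
      qed
      then obtain x where "f x = x"
        using banach_fix_type[of "M*e" f] M(1) e0 E(3) by (auto simp: mult.commute)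
      then have "A x = y - E x" unfolding f_def R_def using op_inverse_apply(2)[OF A(2)] by metis
      then show ?thesis by (intro exI[of _ x]) simp
  qed
  have "surj (\<lambda>x. A x + E x)" unfolding surj_def using ex by blast
  moreover have "\<forall>x. ((1 - M * e) / M) * norm x \<le> norm (A x + E x)"
  proof
    fix x
    have "norm x \<le> M * norm (A x)"
      using M(2)[rule_format, of "A x"] op_inverse_apply(1)[OF A(2)] by simp
    also have "norm (A x) \<le> norm (A x + E x) + e * norm x"
      using E(2) norm_triangle_ineq4[of "A x + E x" "E x"]
      by (smt (verit) add_diff_cancel_right' norm_minus_commute)
    finally have "norm x \<le> M * (norm (A x + E x) + e * norm x)"
      using M(1) by (simp add: mult_left_mono)
    then show "((1 - M * e) / M) * norm x \<le> norm (A x + E x)"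
      using M(1) by (simp add: field_simps)
  qed
  moreover have "(1 - M * e) / M > 0" using E(3) M(1) by (simp add: mult.commute)
  ultimately show ?thesis using invertible_from_surj[OF bcl_sum[OF A(1) E(1)]] by blast
qed


lemma bcl_cscale: "bounded_clinear (\<lambda>x::'a::chilbert. cscale a x)"
  by (rule bcl_intro[where K="cmod a"]) (auto simp: cscale_add_right cscale_cscale mult.commute norm_cscale)

lemma inv_bound_from_below:
  assumes "op_invertible A" "c > 0" "\<forall>x. c * norm x \<le> norm (A x)"
  shows "norm (op_inverse A y) \<le> (1/c) * norm y"
  using assms(3)[rule_format, of "op_inverse A y"] op_inverse_apply(2)[OF assms(1), of y] assms(2)
  by (simp add: field_simps)

lemma shift_split: "(\<lambda>x. S x - cscale l x) = (\<lambda>x. (S x - cscale \<mu> x) + cscale (\<mu> - l) (x::'a::chilbert))"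
  by (rule ext) (simp add: cscale_diff_left)

lemma below_near_invertible:
  assumes S: "bounded_clinear S" and c: "c > 0" "\<forall>x. c * norm x \<le> norm (S x - cscale l x)"
    and inv: "op_invertible (\<lambda>x. S x - cscale \<mu> x)" and d: "cmod (\<mu> - l) < c/2"
  shows "op_invertible (\<lambda>x. S x - cscale l x)"
proof -
  define A where "A = (\<lambda>x. S x - cscale \<mu> x)"
  have Ab: "\<forall>x. (c/2) * norm x \<le> norm (A x)"
  proof
    fix x
    have "S x - cscale l x = A x + cscale (\<mu> - l) x" unfolding A_def by (simp add: cscale_diff_left)
    then have "norm (S x - cscale l x) \<le> norm (A x) + cmod (\<mu> - l) * norm x"
      by (metis norm_cscale norm_triangle_ineq)
    moreover have "cmod (\<mu> - l) * norm x \<le> (c/2) * norm x" using d by (intro mult_right_mono) auto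
    ultimately show "(c/2) * norm x \<le> norm (A x)" using c(2)[rule_format, of x] by linarith
  qed
  have M: "\<forall>y. norm (op_inverse A y) \<le> (2/c) * norm y"
    using inv_bound_from_below[of A "c/2"] inv Ab c(1) unfolding A_def by simp
  have "op_invertible (\<lambda>x. A x + cscale (\<mu> - l) x)"
    apply (rule perturb[where M="2/c" and e="cmod (\<mu> - l)"])
    using bcl_shift[OF S] inv M c(1) d bcl_cscale
    by (auto simp: A_def norm_cscale field_simps)
  then show ?thesis unfolding A_def shift_split[of S l \<mu>] .
qed

lemma resolvent_open:
  assumes S: "bounded_clinear S" and inv: "op_invertible (\<lambda>x. S x - cscale \<mu> x)"
  shows "\<exists>r>0. \<forall>l. cmod (l - \<mu>) < r \<longrightarrow> op_invertible (\<lambda>x. S x - cscale l x)"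
proof -
  obtain M where M: "M > 0" "\<forall>y. norm (op_inverse (\<lambda>x. S x - cscale \<mu> x) y) \<le> M * norm y"
    using op_inverse_bound[OF inv] by blast
  have "op_invertible (\<lambda>x. S x - cscale l x)" if "cmod (l - \<mu>) < 1/M" for l
  proof -
    have "op_invertible (\<lambda>x. (S x - cscale \<mu> x) + cscale (\<mu> - l) x)"
      apply (rule perturb[where M=M and e="cmod (\<mu> - l)"])
      using bcl_shift[OF S] inv M that bcl_cscale
      by (auto simp: norm_cscale field_simps norm_minus_commute)
    then show ?thesis unfolding shift_split[of S l \<mu>] .
  qed
  then show ?thesis using M(1) by (intro exI[of _ "1/M"]) auto
qed

lemma large_resolvent:
  assumes S: "bounded_clinear S" and K: "K > 0" "\<forall>x. norm (S x) \<le> K * norm x" and mu: "cmod \<mu> > K"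
  shows "op_invertible (\<lambda>x. S x - cscale \<mu> x)"
proof -
  define A where "A = (\<lambda>x::'a. cscale (- \<mu>) x)"
  have m0: "\<mu> \<noteq> 0" using mu K by auto
  have Ab: "\<forall>x. cmod \<mu> * norm x \<le> norm (A x)" by (simp add: A_def norm_cscale)
  have "surj A" unfolding surj_def A_def
  proof
    fix y :: 'a
    show "\<exists>x. y = cscale (- \<mu>) x" using m0
      by (intro exI[of _ "cscale (- 1/\<mu>) y"]) (simp add: cscale_cscale cscale_one)
  qed
  then have Ai: "op_invertible A" using invertible_from_surj[OF _ _ Ab] bcl_cscale m0 unfolding A_def by auto
  have "op_invertible (\<lambda>x. A x + S x)"
    apply (rule perturb[where M="1/cmod \<mu>" and e=K])
    using bcl_cscale Ai inv_bound_from_below[OF Ai _ Ab] S K mu m0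
    by (auto simp: A_def field_simps)
  moreover have "(\<lambda>x. A x + S x) = (\<lambda>x. S x - cscale \<mu> x)"
    by (rule ext) (simp add: A_def cscale_minus_left)
  ultimately show ?thesis by simp
qed

lemma not_ap_iff: "l \<notin> ap_spectrum S \<longleftrightarrow> (\<exists>c>0. \<forall>x. c * norm x \<le> norm (S x - cscale l x))"
  by (simp add: ap_spectrum_def)

lemma spectrum_iff: "l \<in> spectrum S \<longleftrightarrow> \<not> op_invertible (\<lambda>x. S x - cscale l x)"
  by (simp add: spectrum_def)

lemma open_resolvent:
  assumes S: "bounded_clinear S"
  shows "open (- spectrum S)"
  unfolding open_dist
proof (intro ballI)
  fix \<mu> assume "\<mu> \<in> - spectrum S"
  then obtain r where "r > 0" "\<forall>l. cmod (l - \<mu>) < r \<longrightarrow> op_invertible (\<lambda>x. S x - cscale l x)"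
    using resolvent_open[OF S] spectrum_iff by blast
  then show "\<exists>e>0. \<forall>y. dist y \<mu> < e \<longrightarrow> y \<in> - spectrum S"
    by (auto simp: dist_norm spectrum_iff)
qed

lemma connected_dichotomy:
  assumes S: "bounded_clinear S" and C: "connected C" "C \<inter> ap_spectrum S = {}"
  shows "C \<subseteq> spectrum S \<or> C \<inter> spectrum S = {}"
proof -
  have sub: "C \<subseteq> (- spectrum S) \<union> interior (spectrum S)"
  proof
    fix l assume lC: "l \<in> C"
    show "l \<in> (- spectrum S) \<union> interior (spectrum S)"
    proof (cases "l \<in> spectrum S")
      case False then show ?thesis by simp
    next
      case True
      obtain c where c: "c > 0" "\<forall>x. c * norm x \<le> norm (S x - cscale l x)"
        using C(2) lC not_ap_iff by blast
      have "ball l (c/2) \<subseteq> spectrum S"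
      proof
        fix \<mu> assume "\<mu> \<in> ball l (c/2)"
        then have "cmod (\<mu> - l) < c/2" by (simp add: dist_norm norm_minus_commute)
        then show "\<mu> \<in> spectrum S"
          using below_near_invertible[OF S c] True spectrum_iff by blast
      qed
      then have "l \<in> interior (spectrum S)" using c(1) by (meson centre_in_ball half_gt_zero interior_maximal open_ball subsetD)
      then show ?thesis by simp
    qed
  qed
  have "(- spectrum S) \<inter> C = {} \<or> interior (spectrum S) \<inter> C = {}"
    by (rule connectedD[OF C(1) open_resolvent[OF S] open_interior]) (use sub interior_subset in auto)
  then show ?thesis using sub by auto
qed





lemma disc_spectrum:
  assumes S: "bounded_clinear S" and ni: "\<not> op_invertible S" and ap: "ap_spectrum S \<subseteq> sphere 0 1"
  shows "spectrum S = cball 0 1 \<and> ap_spectrum S = sphere 0 1"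
proof -
  have "(\<lambda>x. S x - cscale 0 x) = S" by (rule ext) simp
  then have z: "0 \<in> spectrum S" using ni spectrum_iff by metis
  have apm: "cmod l = 1" if "l \<in> ap_spectrum S" for l using ap that by (auto simp: subset_iff)
  have "ball 0 1 \<inter> ap_spectrum S = {}" using apm by fastforce
  then have "ball 0 1 \<subseteq> spectrum S \<or> ball 0 1 \<inter> spectrum S = {}"
    using connected_dichotomy[OF S] convex_connected convex_ball by blast
  moreover have "(0::complex) \<in> ball 0 1" by simp
  ultimately have b: "ball 0 1 \<subseteq> spectrum S" using z by blast
  have "closed (spectrum S)" using open_resolvent[OF S] by (simp add: closed_def)
  then have "closure (ball 0 1) \<subseteq> spectrum S" using b by (rule closure_minimal[rotated])
  then have cb: "cball 0 1 \<subseteq> spectrum S" by simp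
  obtain K where K: "K > 0" "\<forall>x. norm (S x) \<le> K * norm x" using bcl_bound[OF S] by blast
  have conn: "connected (- cball (0::complex) 1)"
    by (rule connected_complement_bounded_convex) auto
  have "(- cball 0 1) \<inter> ap_spectrum S = {}" using apm by fastforce
  then have "(- cball 0 1) \<subseteq> spectrum S \<or> (- cball 0 1) \<inter> spectrum S = {}"
    using connected_dichotomy[OF S conn] by blast
  moreover have "complex_of_real (K + 2) \<in> - cball 0 1" using K by auto
  moreover have "cmod (complex_of_real (K + 2)) > K" using K(1) by simp
  then have "complex_of_real (K + 2) \<notin> spectrum S"
    using large_resolvent[OF S K] spectrum_iff by blast
  ultimately have "(- cball 0 1) \<inter> spectrum S = {}" by blast
  then have sp: "spectrum S = cball 0 1" using cb by blast
  have "sphere 0 1 \<subseteq> ap_spectrum S"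
  proof
    fix l :: complex assume l: "l \<in> sphere 0 1"
    show "l \<in> ap_spectrum S"
    proof (rule ccontr)
      assume "l \<notin> ap_spectrum S"
      then obtain c where c: "c > 0" "\<forall>x. c * norm x \<le> norm (S x - cscale l x)"
        using not_ap_iff by blast
      define \<mu> where "\<mu> = l * complex_of_real (1 + c/4)"
      have ml: "cmod (\<mu> - l) < c/2" using l c(1)
        by (simp add: \<mu>_def algebra_simps norm_mult)
      have e: "cmod (complex_of_real (1 + c/4)) = 1 + c/4" using c(1) by (simp only: norm_of_real)
      have "cmod l = 1" using l by simp
      then have "cmod \<mu> = 1 + c/4" unfolding \<mu>_def norm_mult e by simp
      then have "cmod \<mu> > 1" using c(1) by simp
      then have "\<mu> \<notin> spectrum S" using sp by auto
      then have "op_invertible (\<lambda>x. S x - cscale \<mu> x)" using spectrum_iff by blast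
      then have "op_invertible (\<lambda>x. S x - cscale l x)" using below_near_invertible[OF S c _ ml] by blast
      moreover have "l \<in> spectrum S" using l sp by auto
      ultimately show False using spectrum_iff by blast
    qed
  qed
  then show ?thesis using sp ap by blast
qed




lemma cinner_self_eq_zero: "cinner x x = 0 \<longleftrightarrow> x = (0::'a::chilbert)"
  by (simp add: cinner_self_norm)

lemma cinner_ext: "(\<And>x. cinner x a = cinner x b) \<Longrightarrow> a = (b::'a::chilbert)"
  by (metis cinner_diff_right cinner_self_eq_zero diff_eq_eq diff_self)

lemma norm_add_sq: "(norm (a + b))\<^sup>2 = (norm a)\<^sup>2 + (norm b)\<^sup>2 + 2 * Re (cinner a (b::'a::chilbert))"
proof -
  have "complex_of_real ((norm (a + b))\<^sup>2) = cinner a a + cinner b b + (cinner a b + cnj (cinner a b))"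
    unfolding cinner_self_norm[symmetric] by (simp add: cinner_add_left cinner_add_right cinner_cnj[of b a])
  also have "\<dots> = complex_of_real ((norm a)\<^sup>2 + (norm b)\<^sup>2 + 2 * Re (cinner a b))"
    by (simp add: cinner_self_norm complex_add_cnj del: of_real_power)
  finally show ?thesis using of_real_eq_iff by blast
qed

lemma norm_diff_sq: "(norm (a - b))\<^sup>2 = (norm a)\<^sup>2 + (norm b)\<^sup>2 - 2 * Re (cinner a (b::'a::chilbert))"
  using norm_add_sq[of a "-b"] by (simp add: cinner_minus_right)

lemma variation_Re:
  assumes "\<forall>t::real. norm y \<le> norm (y - cscale (complex_of_real t) z)"
  shows "Re (cinner y (z::'a::chilbert)) = 0"
proof -
  define r where "r = Re (cinner y z)"
  define N where "N = (norm z)\<^sup>2"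
  define t where "t = r / (N + 1)"
  have N0: "N \<ge> 0" by (simp add: N_def)
  have "(norm y)\<^sup>2 \<le> (norm (y - cscale (complex_of_real t) z))\<^sup>2"
    using assms by (simp add: power_mono)
  also have "\<dots> = (norm y)\<^sup>2 + t^2 * N - 2 * t * r"
    unfolding norm_diff_sq by (simp add: norm_cscale cinner_cscale_right N_def r_def power_mult_distrib)
  finally have "2 * t * r \<le> t^2 * N" by simp
  then have "2 * t * r * (N+1)^2 \<le> t^2 * N * (N+1)^2" by (rule mult_right_mono) auto
  moreover have "N + 1 \<noteq> 0" using N0 by simp
  then have "2 * t * r * (N+1)^2 = 2 * r * r * (N + 1)"
    by (simp add: t_def power2_eq_square field_simps)
  moreover have "t^2 * N * (N+1)^2 = r * r * N" using \<open>N + 1 \<noteq> 0\<close>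
    by (simp add: t_def power_divide power2_eq_square)
  ultimately have "2 * r * r * (N + 1) \<le> r * r * N" by simp
  then have "r * r * (N + 2) \<le> 0" by (simp add: algebra_simps)
  then have "r * r \<le> 0" using N0 by (smt (verit) mult_le_0_iff zero_le_square)
  then have "r = 0" by (simp add: mult_le_0_iff) (use antisym in blast)
  then show ?thesis unfolding r_def .

qed

lemma variation_zero:
  assumes "\<forall>t::complex. norm y \<le> norm (y - cscale t z)"
  shows "cinner y (z::'a::chilbert) = 0"
proof -
  have "Re (cinner y z) = 0" using variation_Re assms by blast
  moreover have "Re (cinner y (cscale \<i> z)) = 0"
    using assms variation_Re[of y "cscale \<i> z"] by (simp add: cscale_cscale)
  then have "Im (cinner y z) = 0" by (simp add: cinner_cscale_right)
  ultimately show ?thesis by (simp add: complex_eq_iff)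
qed


lemma parallelogram: "(norm (a - b))\<^sup>2 = 2 * (norm a)\<^sup>2 + 2 * (norm b)\<^sup>2 - (norm (a + (b::'a::chilbert)))\<^sup>2"
  using norm_add_sq[of a b] norm_diff_sq[of a b] by simp

lemma orth_exists:
  fixes M :: "'a::chilbert set"
  assumes cl: "closed M" and z: "0 \<in> M" and add: "\<And>u v. u \<in> M \<Longrightarrow> v \<in> M \<Longrightarrow> u + v \<in> M"
    and sc: "\<And>a u. u \<in> M \<Longrightarrow> cscale a u \<in> M" and x: "x \<notin> M"
  shows "\<exists>y. y \<noteq> 0 \<and> (\<forall>w\<in>M. cinner y w = 0)"
proof -
  define d where "d = infdist x M"
  have dle: "d \<le> norm (x - u)" if "u \<in> M" for u
    using infdist_le[OF that, of x] by (simp add: d_def dist_norm)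
  have d0: "d \<ge> 0" unfolding d_def by (rule infdist_nonneg)
  have approx: "\<exists>u\<in>M. norm (x - u) < d + e" if "e > 0" for e
  proof -
    have "M \<noteq> {}" using z by blast
    then have "(INF a\<in>M. dist x a) = d" using infdist_notempty[of M x] by (simp add: d_def)
    then have "(INF a\<in>M. dist x a) < d + e" using that by simp
    then have "\<exists>u\<in>M. dist x u < d + e"
      using cINF_less_iff[of M "dist x"] z by (auto intro: bdd_belowI[of _ 0])
    then show ?thesis by (simp add: dist_norm)
  qed
  have "\<forall>n. \<exists>u. u \<in> M \<and> norm (x - u) < d + 1 / real (Suc n)"
  proof
    fix n
    have "(1::real) / real (Suc n) > 0" by simp
    then show "\<exists>u. u \<in> M \<and> norm (x - u) < d + 1 / real (Suc n)" using approx by blast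
  qed
  then obtain u where u: "\<And>n. u n \<in> M" "\<And>n. norm (x - u n) < d + 1 / real (Suc n)"
    by metis
  have mid: "2 * d \<le> norm ((x - a) + (x - b))" if "a \<in> M" "b \<in> M" for a b
  proof -
    have "cscale (complex_of_real (1/2)) (a + b) \<in> M" by (rule sc[OF add[OF that]])
    then have "(1/2) *\<^sub>R (a + b) \<in> M" by (simp only: cscale_of_real)
    then have "d \<le> norm (x - (1/2) *\<^sub>R (a + b))" by (rule dle)
    moreover have "(x - a) + (x - b) = 2 *\<^sub>R (x - (1/2) *\<^sub>R (a + b))" by (simp add: algebra_simps scaleR_2)
    ultimately show ?thesis by simp
  qed
  have bnd: "(norm (u m - u n))\<^sup>2 \<le> 8 * d * \<delta> + 4 * \<delta>\<^sup>2"
    if "1 / real (Suc m) \<le> \<delta>" "1 / real (Suc n) \<le> \<delta>" for m n \<delta>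
  proof -
    have "u m - u n = (x - u n) - (x - u m)" by simp
    then have "(norm (u m - u n))\<^sup>2 = 2 * (norm (x - u n))\<^sup>2 + 2 * (norm (x - u m))\<^sup>2 - (norm ((x - u n) + (x - u m)))\<^sup>2"
      using parallelogram by metis
    moreover have "(norm (x - u n))\<^sup>2 \<le> (d + \<delta>)\<^sup>2"
      using u(2)[of n] that(2) by (intro power_mono) auto
    moreover have "(norm (x - u m))\<^sup>2 \<le> (d + \<delta>)\<^sup>2"
      using u(2)[of m] that(1) by (intro power_mono) auto
    moreover have "(2 * d)\<^sup>2 \<le> (norm ((x - u n) + (x - u m)))\<^sup>2"
      using mid[OF u(1) u(1)] d0 by (intro power_mono) auto
    ultimately show ?thesis by (simp add: power2_eq_square algebra_simps)
  qed
  have "Cauchy u"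
  proof (rule CauchyI)
    fix e :: real assume e: "e > 0"
    have "e\<^sup>2 / (8 * d + 4) > 0" using e d0 by simp
    then obtain N where N: "inverse (real (Suc N)) < min 1 (e\<^sup>2 / (8 * d + 4))"
      using reals_Archimedean[of "min 1 (e\<^sup>2 / (8 * d + 4))"] by auto
    define \<delta> where "\<delta> = 1 / real (Suc N)"
    have \<delta>: "\<delta> > 0" "\<delta> \<le> 1" "\<delta> * (8 * d + 4) < e\<^sup>2"
      using N d0 by (auto simp: \<delta>_def field_simps)
    have "\<forall>m\<ge>N. \<forall>n\<ge>N. norm (u m - u n) < e"
    proof (intro allI impI)
      fix m n assume mn: "m \<ge> N" "n \<ge> N"
      have "1 / real (Suc m) \<le> \<delta>" "1 / real (Suc n) \<le> \<delta>"
        using mn by (auto simp: \<delta>_def frac_le)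
      then have "(norm (u m - u n))\<^sup>2 \<le> 8 * d * \<delta> + 4 * \<delta>\<^sup>2" by (rule bnd)
      also have "\<dots> \<le> \<delta> * (8 * d + 4)" using \<delta> by (simp add: power2_eq_square algebra_simps)
      also have "\<dots> < e\<^sup>2" by (rule \<delta>(3))
      finally show "norm (u m - u n) < e" using e by (simp add: power2_less_imp_less)
    qed
    then show "\<exists>M. \<forall>m\<ge>M. \<forall>n\<ge>M. norm (u m - u n) < e" by blast
  qed
  then obtain m where lim: "u \<longlonglongrightarrow> m" using Cauchy_convergent convergent_def by blast
  have mM: "m \<in> M" using closed_sequentially[OF cl u(1) lim] .
  have lim2: "(\<lambda>n. norm (x - u n)) \<longlonglongrightarrow> norm (x - m)"
    by (intro tendsto_intros lim)
  have lim3: "(\<lambda>n. d + 1 / real (Suc n)) \<longlonglongrightarrow> d"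
    using tendsto_add[OF tendsto_const LIMSEQ_inverse_real_of_nat, of d] by (simp add: inverse_eq_divide)
  have "norm (x - m) \<le> d"
    using lim2 lim3 u(2) by (intro LIMSEQ_le[OF lim2 lim3]) (auto intro: less_imp_le)
  define y where "y = x - m"
  have y0: "y \<noteq> 0" using x mM by (auto simp: y_def)
  have "cinner y w = 0" if w: "w \<in> M" for w
  proof (rule variation_zero, intro allI)
    fix t
    have "m + cscale t w \<in> M" using add[OF mM sc[OF w]] .
    then have "d \<le> norm (x - (m + cscale t w))" by (rule dle)
    then show "norm y \<le> norm (y - cscale t w)"
      using \<open>norm (x - m) \<le> d\<close> by (simp add: y_def algebra_simps)
  qed
  then show ?thesis using y0 by blast
qed





lemma riesz:
  fixes f :: "'a::chilbert \<Rightarrow> complex"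
  assumes add: "\<And>x y. f (x + y) = f x + f y" and sc: "\<And>a x. f (cscale a x) = a * f x"
    and bd: "\<And>x. cmod (f x) \<le> K * norm x"
  shows "\<exists>z. \<forall>x. f x = cinner z x"
proof (cases "\<forall>x. f x = 0")
  case True then show ?thesis by (intro exI[of _ 0]) simp
next
  case False
  then obtain x0 where x0: "f x0 \<noteq> 0" by blast
  have f0: "f 0 = 0" using add[of 0 0] by simp
  have fdiff: "f (a - b) = f a - f b" for a b using add[of "a - b" b] by simp
  define N where "N = {x. f x = 0}"
  have "closed N" unfolding closed_sequential_limits
  proof (intro allI impI)
    fix s l assume sl: "(\<forall>n. s n \<in> N) \<and> s \<longlonglongrightarrow> l"
    have le: "cmod (f l) \<le> K * norm (l - s n)" for n
      using bd[of "l - s n"] sl fdiff[of l "s n"] by (simp add: N_def)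
    have lim: "(\<lambda>n. K * norm (l - s n)) \<longlonglongrightarrow> K * norm (l - l)"
      using sl by (intro tendsto_intros) auto
    then have "cmod (f l) \<le> 0"
      using LIMSEQ_le[OF tendsto_const[of "cmod (f l)"] lim] le by auto
    then show "l \<in> N" by (simp add: N_def)
  qed
  moreover have "0 \<in> N" using f0 by (simp add: N_def)
  moreover have "\<And>u v. u \<in> N \<Longrightarrow> v \<in> N \<Longrightarrow> u + v \<in> N" by (simp add: N_def add)
  moreover have "\<And>a u. u \<in> N \<Longrightarrow> cscale a u \<in> N" by (simp add: N_def sc)
  moreover have "x0 \<notin> N" using x0 by (simp add: N_def)
  ultimately have "\<exists>y. y \<noteq> 0 \<and> (\<forall>w\<in>N. cinner y w = 0)" by (rule orth_exists)
  then obtain y where y: "y \<noteq> 0" "\<forall>w\<in>N. cinner y w = 0" by blast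
  have yy: "cinner y y \<noteq> 0" using y(1) by (simp add: cinner_self_eq_zero)
  have fv: "f v = f y * cinner y v / cinner y y" for v
  proof -
    have "f (cscale (f v) y - cscale (f y) v) = 0" by (simp add: fdiff sc)
    then have "cinner y (cscale (f v) y - cscale (f y) v) = 0" using y(2) by (simp add: N_def)
    then have "f v * cinner y y = f y * cinner y v"
      by (simp add: cinner_diff_right cinner_cscale_right)
    then show ?thesis using yy by (simp add: field_simps)
  qed
  have "f v = cinner (cscale (cnj (f y / cinner y y)) y) v" for v
    unfolding cinner_cscale_left complex_cnj_cnj fv[of v] by simp
  then show ?thesis by blast
qed

lemma adjoint_props:
  fixes T :: "'a::chilbert \<Rightarrow> 'a"
  assumes T: "bounded_clinear T"
  shows "(\<forall>x y. cinner (T x) y = cinner x (adjoint T y)) \<and> bounded_clinear (adjoint T)"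
proof -
  obtain K where K: "K > 0" "\<forall>x. norm (T x) \<le> K * norm x" using bcl_bound[OF T] by blast
  have ex: "\<exists>z. \<forall>x. cinner (T x) y = cinner x z" for y
  proof -
    have "\<exists>z. \<forall>x. cinner y (T x) = cinner z x"
    proof (rule riesz[where K="norm y * K"])
      show "cinner y (T (x + x')) = cinner y (T x) + cinner y (T x')" for x x'
        using T by (simp add: bcl_add cinner_add_right)
      show "cinner y (T (cscale a x)) = a * cinner y (T x)" for a x
        using T by (simp add: bcl_scale cinner_cscale_right)
      show "cmod (cinner y (T x)) \<le> norm y * K * norm x" for x
        using cauchy_schwarz[of y "T x"] K(2)[rule_format, of x]
        by (metis mult.assoc mult_left_mono norm_ge_zero order_trans)
    qed
    then obtain z where "\<forall>x. cinner y (T x) = cinner z x" by blast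
    then have "\<forall>x. cinner (T x) y = cinner x z" by (metis cinner_cnj)
    then show ?thesis by blast
  qed
  define S where "S = (\<lambda>y. SOME z. \<forall>x. cinner (T x) y = cinner x z)"
  have S: "\<forall>x y. cinner (T x) y = cinner x (S y)"
    unfolding S_def using someI_ex[OF ex] by blast
  have adjS: "adjoint T = S"
    unfolding adjoint_def
  proof (rule the_equality)
    show "\<forall>x y. cinner (T x) y = cinner x (S y)" by (rule S)
    fix S' assume S': "\<forall>x y. cinner (T x) y = cinner x (S' y)"
    show "S' = S"
    proof
      fix y show "S' y = S y" using S S' by (metis cinner_ext)
    qed
  qed
  have bS: "bounded_clinear S"
  proof (rule bcl_intro[where K=K])
    show "S (y + y') = S y + S y'" for y y'
      by (rule cinner_ext) (metis S cinner_add_right)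
    show "S (cscale a y) = cscale a (S y)" for a y
      by (rule cinner_ext) (metis S cinner_cscale_right)
    show "norm (S y) \<le> K * norm y" for y
    proof -
      have "(norm (S y))\<^sup>2 = Re (cinner (S y) (S y))" by (simp add: cinner_self_norm)
      also have "\<dots> = Re (cinner (T (S y)) y)" using S by simp
      also have "\<dots> \<le> cmod (cinner (T (S y)) y)" by (rule complex_Re_le_cmod)
      also have "\<dots> \<le> norm (T (S y)) * norm y" by (rule cauchy_schwarz)
      also have "\<dots> \<le> K * norm (S y) * norm y" using K(2) by (simp add: mult_right_mono)
      finally have "norm (S y) * norm (S y) \<le> (K * norm y) * norm (S y)"
        by (simp add: power2_eq_square algebra_simps)
      then show ?thesis
        using K(1) by (cases "norm (S y) = 0") (auto simp: mult_le_cancel_right)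
    qed
  qed
  show ?thesis unfolding adjS using S bS by blast
qed


lemma normal_ge_one_invertible:
  fixes T :: "'a::chilbert \<Rightarrow> 'a"
  assumes A: "bounded_clinear A" and pos: "\<And>x. cinner x (A x) = complex_of_real ((norm (T x))\<^sup>2)"
    and T: "\<And>x. norm x \<le> norm (T x)"
  shows "op_invertible A"
proof -
  have below: "(1 - Re l) * norm x \<le> norm (A x - cscale l x)" if l: "Re l < 1" for l x
  proof -
    have "(1 - Re l) * (norm x)\<^sup>2 \<le> (norm (T x))\<^sup>2 - Re l * (norm x)\<^sup>2"
      using T[of x] by (simp add: algebra_simps power_mono)
    also have "\<dots> = Re (cinner x (A x - cscale l x))"
      by (simp add: cinner_diff_right cinner_cscale_right pos cinner_self_norm del: of_real_power)
    also have "\<dots> \<le> cmod (cinner x (A x - cscale l x))" by (rule complex_Re_le_cmod)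
    also have "\<dots> \<le> norm x * norm (A x - cscale l x)" by (rule cauchy_schwarz)
    finally have "norm x * ((1 - Re l) * norm x) \<le> norm x * norm (A x - cscale l x)"
      by (simp add: power2_eq_square algebra_simps)
    then show ?thesis
      using l by (cases "norm x = 0") (auto simp: mult_le_cancel_left)
  qed
  have "{z. 1 > Re z} \<inter> ap_spectrum A = {}"
  proof (safe)
    fix l assume l: "1 > Re l" "l \<in> ap_spectrum A"
    have "\<forall>x. (1 - Re l) * norm x \<le> norm (A x - cscale l x)" using below[OF l(1)] by blast
    moreover have "1 - Re l > 0" using l(1) by simp
    ultimately have "l \<notin> ap_spectrum A" unfolding not_ap_iff by blast
    then show "l \<in> {}" using l(2) by blast
  qed
  then have "{z. 1 > Re z} \<subseteq> spectrum A \<or> {z. 1 > Re z} \<inter> spectrum A = {}"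
    using connected_dichotomy[OF A] connected_halfspace_Re_lt by blast
  moreover obtain K where K: "K > 0" "\<forall>x. norm (A x) \<le> K * norm x" using bcl_bound[OF A] by blast
  have "cmod (- complex_of_real (K + 2)) = \<bar>K + 2\<bar>" by (simp only: norm_minus_cancel norm_of_real)
  then have "cmod (- complex_of_real (K + 2)) > K" using K(1) by simp
  then have "- complex_of_real (K + 2) \<notin> spectrum A"
    using large_resolvent[OF A K] spectrum_iff by blast
  moreover have "- complex_of_real (K + 2) \<in> {z. 1 > Re z}" using K(1) by simp
  ultimately have "{z. 1 > Re z} \<inter> spectrum A = {}" by blast
  moreover have "(0::complex) \<in> {z. 1 > Re z}" by simp
  ultimately have "0 \<notin> spectrum A" by blast
  moreover have "(\<lambda>x. A x - cscale 0 x) = A" by (rule ext) simp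
  ultimately show ?thesis using spectrum_iff by metis
qed

theorem corollary4p7:
  fixes T :: "'a::chilbert \<Rightarrow> 'a"
  assumes "bounded_clinear T"
    and "\<not> op_invertible T"
    and "\<forall>x. norm (T x) \<ge> norm x"
    and "ap_spectrum T \<subseteq> sphere 0 1"
  shows "spectrum T = cball 0 1 \<and> spectrum (T \<circ> op_inverse (adjoint T \<circ> T)) = cball 0 1
       \<and> ap_spectrum T = sphere 0 1 \<and> ap_spectrum (T \<circ> op_inverse (adjoint T \<circ> T)) = sphere 0 1"
proof -
  note T = assms(1) and ni = assms(2) and below1 = assms(3)
  have dT: "spectrum T = cball 0 1 \<and> ap_spectrum T = sphere 0 1"
    using disc_spectrum[OF T ni assms(4)] .
  define Ts where "Ts = adjoint T"
  have adj: "\<And>x y. cinner (T x) y = cinner x (Ts y)" and Tsb: "bounded_clinear Ts"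
    using adjoint_props[OF T] by (auto simp: Ts_def)
  define A where "A = Ts \<circ> T"
  have Ab: "bounded_clinear A" unfolding A_def by (rule bcl_comp[OF Tsb T])
  have pos: "cinner x (A x) = complex_of_real ((norm (T x))\<^sup>2)" for x
    using adj[of x "T x"] by (simp add: A_def cinner_self_norm)
  have Ainv: "op_invertible A"
    by (rule normal_ge_one_invertible[OF Ab pos]) (use below1 in auto)
  define G where "G = op_inverse A"
  have Gb: "bounded_clinear G" and GA: "\<And>x. G (A x) = x" and AG: "\<And>y. A (G y) = y"
    using op_inverse_props[OF Ainv] op_inverse_apply[OF Ainv] by (auto simp: G_def)
  define T' where "T' = T \<circ> G"
  have T'b: "bounded_clinear T'" unfolding T'_def by (rule bcl_comp[OF T Gb])
  obtain KA where KA: "KA > 0" "\<forall>x. norm (A x) \<le> KA * norm x" using bcl_bound[OF Ab] by blast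
  have Gx: "norm x \<le> KA * norm (G x)" for x using KA(2)[rule_format, of "G x"] AG[of x] by simp
  have TG: "norm (G x) \<le> norm (T' x)" for x using below1 by (simp add: T'_def)
  have contr: "norm (T' x) \<le> norm x" for x
  proof -
    have "(norm (T' x))\<^sup>2 = Re (cinner (G x) (A (G x)))" by (simp add: pos T'_def)
    also have "\<dots> = Re (cinner (G x) x)" by (simp add: AG)
    also have "\<dots> \<le> cmod (cinner (G x) x)" by (rule complex_Re_le_cmod)
    also have "\<dots> \<le> norm (G x) * norm x" by (rule cauchy_schwarz)
    also have "\<dots> \<le> norm (T' x) * norm x" using TG[of x] by (simp add: mult_right_mono)
    finally have "norm (T' x) * norm (T' x) \<le> norm x * norm (T' x)"
      by (simp add: power2_eq_square algebra_simps)
    then show ?thesis by (cases "norm (T' x) = 0") (auto simp: mult_le_cancel_right)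
  qed
  have ni': "\<not> op_invertible T'"
  proof
    assume inv: "op_invertible T'"
    have "surj T" unfolding surj_def
    proof
      fix y show "\<exists>x. y = T x"
        using op_inverse_apply(2)[OF inv, of y] unfolding T'_def comp_def by metis
    qed
    then have "op_invertible T"
      using invertible_from_surj[OF T, of 1] below1 by simp
    then show False using ni by simp
  qed
  have ap': "ap_spectrum T' \<subseteq> sphere 0 1"
  proof
    fix l assume lap: "l \<in> ap_spectrum T'"
    show "l \<in> sphere 0 1"
    proof (rule ccontr)
      assume ns: "l \<notin> sphere 0 1"
      have "\<exists>c>0. \<forall>x. c * norm x \<le> norm (T' x - cscale l x)"
      proof (cases "l = 0")
        case True
        have "(1 / KA) * norm x \<le> norm (T' x - cscale l x)" for x
        proof -
          have "norm x \<le> KA * norm (T' x)" using Gx[of x] TG[of x] KA(1)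
            by (meson mult_left_mono order_trans less_imp_le)
          then show ?thesis using True KA(1) by (simp add: field_simps)
        qed
        then show ?thesis using KA(1) by (intro exI[of _ "1/KA"]) auto
      next
        case l0: False
        show ?thesis
        proof (cases "cmod l > 1")
          case True
          have "(cmod l - 1) * norm x \<le> norm (T' x - cscale l x)" for x
          proof -
            have "norm (cscale l x) \<le> norm (T' x) + norm (T' x - cscale l x)"
              using norm_triangle_ineq4[of "T' x" "T' x - cscale l x"] by simp
            then show ?thesis using contr[of x] by (simp add: norm_cscale algebra_simps)
          qed
          then show ?thesis using True by (intro exI[of _ "cmod l - 1"]) auto
        next
          case False
          then have l1: "cmod l < 1" using ns by auto
          define \<nu> where "\<nu> = cnj (1 / l)"
          have "cmod \<nu> > 1" using l1 l0 by (simp add: \<nu>_def norm_divide)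
          then have "\<nu> \<notin> spectrum T" using dT by auto
          then have inv: "op_invertible (\<lambda>x. T x - cscale \<nu> x)" using spectrum_iff by blast
          obtain M where M: "M > 0" "\<forall>y. norm (op_inverse (\<lambda>x. T x - cscale \<nu> x) y) \<le> M * norm y"
            using op_inverse_bound[OF inv] by blast
          define R where "R = op_inverse (\<lambda>x. T x - cscale \<nu> x)"
          have TR: "T (R z) - cscale \<nu> (R z) = z" for z
            using op_inverse_apply(2)[OF inv] by (simp add: R_def)
          have star: "norm z \<le> M * norm (Ts z - cscale (1/l) z)" for z
          proof -
            have "complex_of_real ((norm z)\<^sup>2) = cinner (T (R z) - cscale \<nu> (R z)) z"
              by (simp add: TR cinner_self_norm)
            also have "\<dots> = cinner (R z) (Ts z - cscale (1/l) z)"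
              by (simp add: cinner_diff_left cinner_diff_right cinner_cscale_left cinner_cscale_right adj \<nu>_def)
            finally have eqz: "complex_of_real ((norm z)\<^sup>2) = cinner (R z) (Ts z - cscale (1/l) z)" .
            have "(norm z)\<^sup>2 = cmod (cinner (R z) (Ts z - cscale (1/l) z))"
              unfolding eqz[symmetric] norm_of_real by simp
            also have "\<dots> \<le> norm (R z) * norm (Ts z - cscale (1/l) z)" by (rule cauchy_schwarz)
            also have "\<dots> \<le> M * norm z * norm (Ts z - cscale (1/l) z)"
              using M(2) by (simp add: R_def mult_right_mono)
            finally have "norm z * norm z \<le> norm z * (M * norm (Ts z - cscale (1/l) z))"
              by (simp add: power2_eq_square algebra_simps)
            then show ?thesis using M(1)
              by (cases "norm z = 0") (auto simp: mult_le_cancel_left)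
          qed
          have "(cmod l / (M * KA)) * norm x \<le> norm (T' x - cscale l x)" for x
          proof -
            define z where "z = T (G x)"
            have xz: "x = Ts z" using AG[of x] by (simp add: A_def z_def)
            have "T' x - cscale l x = cscale (- l) (Ts z - cscale (1/l) z)"
              using l0 by (simp add: T'_def z_def[symmetric] xz[symmetric] cscale_diff_right
                  cscale_cscale cscale_minus_left cscale_one)
            then have eq: "norm (T' x - cscale l x) = cmod l * norm (Ts z - cscale (1/l) z)"
              by (simp add: norm_cscale)
            have "norm x \<le> KA * norm (G x)" by (rule Gx)
            also have "norm (G x) \<le> norm z" using TG[of x] by (simp add: z_def T'_def)
            then have "KA * norm (G x) \<le> KA * norm z" using KA(1) by simp
            also have "norm z \<le> M * norm (Ts z - cscale (1/l) z)" by (rule star)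
            then have "KA * norm z \<le> KA * (M * norm (Ts z - cscale (1/l) z))" using KA(1) by simp
            finally have "norm x \<le> KA * M * norm (Ts z - cscale (1/l) z)" by simp
            then have "cmod l * norm x \<le> cmod l * (KA * M * norm (Ts z - cscale (1/l) z))"
              by (simp add: mult_left_mono)
            then show ?thesis using eq KA(1) M(1) by (simp add: field_simps)
          qed
          moreover have "cmod l / (M * KA) > 0" using l0 M(1) KA(1) by simp
          ultimately show ?thesis by blast
        qed
      qed
      then show False using lap not_ap_iff by blast
    qed
  qed
  have dT': "spectrum T' = cball 0 1 \<and> ap_spectrum T' = sphere 0 1"
    using disc_spectrum[OF T'b ni' ap'] .
  show ?thesis using dT dT' by (simp add: T'_def G_def A_def Ts_def)
qed


end
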